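(* Let $k\ge1$ and $0\le r<k$ be integers. Then for every $n\ge1$, $$\sum_{j=0}^n(-1)^j\binom{r+1}{j}F^{(k)}_{k(n-j)+r}(x)=x^{r+1}F^{(k)}_{kn-1}(x),$$ and for every $n\ge1$ and every integer $i$ with $0<i<k+n$, $$\sum_{j=0}^{n-1}(-1)^{n-1-j}\binom{i-k+r}{n-1-j}x^kF^{(k)}_{kj+r}(x)=x^{r+i}F^{(k)}_{kn-i}(x).$$
   Context: Binomial coefficients are the generalized ones: for an integer $m$ (possibly negative) and an integer $j$, $\binom{m}{j}=\frac{m(m-1)\cdots(m-j+1)}{j!}$ if $j\ge 0$ and $\binom{m}{j}=0$ if $j<0$. For an integer $k\ge1$, the generalized Fibonacci polynomials $F^{(k)}_n(x)\in\mathbb{Z}[x]$ ($n\ge0$) are defined by $F^{(k)}_n(x)=x^n$ for $0\le n<k$ and $F^{(k)}_n(x)=xF^{(k)}_{n-1}(x)+F^{(k)}_{n-k}(x)$ for $n\ge k$. *)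

theory Defs
  imports "HOL-Computational_Algebra.Polynomial"
begin

text \<open>Generalized Fibonacci polynomials F^(k)_n(x) in Z[x]; only meaningful for k >= 1
  (the k = 0 branch is an arbitrary convention making the function total).\<close>
function genfib :: "nat \<Rightarrow> nat \<Rightarrow> int poly" where
  "genfib k n = (if k = 0 \<or> n < k then [:0, 1:] ^ n
                 else [:0, 1:] * genfib k (n - 1) + genfib k (n - k))"
  by auto
termination by (relation "measure snd") auto

definition gbinom :: "int \<Rightarrow> nat \<Rightarrow> int" where
  "gbinom m j = (\<Prod>i<j. m - int i) div int (fact j)"

end

theory Submission imports Defs "HOL.Binomial_Plus" begin
declare genfib.simps[simp del]

lemma gb_pascal: "gbinom (x+1) (Suc j) = gbinom x j + gbinom x (Suc j)"
  unfolding gbinom_def atLeast0LessThan[symmetric] of_nat_fact gbinomial_prod_rev[symmetric] by (rule gbinomial_int_Suc_Suc)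

lemma gb_0 [simp]: "gbinom x 0 = 1"
  unfolding gbinom_def by simp

lemma gb_0_left [simp]: "gbinom 0 (Suc j) = 0"
  unfolding gbinom_def by (simp add: prod.lessThan_Suc_shift del: prod.lessThan_Suc)

lemma genfib_small: "n < k \<Longrightarrow> genfib k n = [:0,1:]^n"
  by (subst genfib.simps) simp

lemma genfib_rec: "1 \<le> k \<Longrightarrow> k \<le> n \<Longrightarrow> genfib k n = [:0,1:] * genfib k (n-1) + genfib k (n-k)"
  by (subst genfib.simps) simp

definition U :: "nat \<Rightarrow> nat \<Rightarrow> nat \<Rightarrow> nat \<Rightarrow> int poly" where
  "U k r m n = (\<Sum>j\<le>n. smult ((-1)^j * gbinom (int m) j) (genfib k (k*(n-j)+r)))"

lemma U_pascal: "U k r (Suc m) (Suc n) = U k r m (Suc n) - U k r m n"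
proof -
  have c: "gbinom (int (Suc m)) (Suc j) = gbinom (int m) j + gbinom (int m) (Suc j)" for j
    unfolding of_nat_Suc add.commute[of 1 "int m"] by (rule gb_pascal)
  have "U k r (Suc m) (Suc n) = genfib k (k*Suc n + r) +
     (\<Sum>j\<le>n. smult ((-1)^Suc j * gbinom (int (Suc m)) (Suc j)) (genfib k (k*(n-j)+r)))"
    unfolding U_def by (subst sum.atMost_Suc_shift) simp
  also have "\<dots> = genfib k (k*Suc n + r) +
     (\<Sum>j\<le>n. smult ((-1)^Suc j * gbinom (int m) (Suc j)) (genfib k (k*(n-j)+r)))
     - (\<Sum>j\<le>n. smult ((-1)^j * gbinom (int m) j) (genfib k (k*(n-j)+r)))"
    unfolding c add_diff_eq[symmetric] sum_subtractf[symmetric]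
    by (intro arg_cong2[where f="(+)"] refl sum.cong) (simp_all add: algebra_simps smult_add_left smult_diff_left)
  also have "genfib k (k*Suc n + r) +
     (\<Sum>j\<le>n. smult ((-1)^Suc j * gbinom (int m) (Suc j)) (genfib k (k*(n-j)+r))) = U k r m (Suc n)"
    unfolding U_def by (subst sum.atMost_Suc_shift) simp
  finally show ?thesis unfolding U_def by simp
qed

definition V :: "nat \<Rightarrow> nat \<Rightarrow> int \<Rightarrow> nat \<Rightarrow> int poly" where
  "V k r a p = (\<Sum>j\<le>p. smult ((-1)^(p-j) * gbinom a (p-j)) (genfib k (k*j+r)))"

lemma V_pascal: "V k r (a+1) (Suc p) = V k r a (Suc p) - V k r a p"
proof -
  have c: "gbinom (a+1) (Suc j) = gbinom a j + gbinom a (Suc j)" for j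
    using gb_pascal[of a j] by simp
  have e: "\<And>j. j \<le> p \<Longrightarrow> Suc p - j = Suc (p - j)" by auto
  have "V k r (a+1) (Suc p) = genfib k (k*Suc p + r) +
     (\<Sum>j\<le>p. smult ((-1)^Suc (p-j) * gbinom (a+1) (Suc (p-j))) (genfib k (k*j+r)))"
    unfolding V_def by (simp add: e)
  also have "\<dots> = genfib k (k*Suc p + r) +
     (\<Sum>j\<le>p. smult ((-1)^Suc (p-j) * gbinom a (Suc (p-j))) (genfib k (k*j+r)))
     - (\<Sum>j\<le>p. smult ((-1)^(p-j) * gbinom a (p-j)) (genfib k (k*j+r)))"
    unfolding c add_diff_eq[symmetric] sum_subtractf[symmetric]
    by (intro arg_cong2[where f="(+)"] refl sum.cong) (simp_all add: algebra_simps smult_add_left smult_diff_left)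
  also have "genfib k (k*Suc p + r) +
     (\<Sum>j\<le>p. smult ((-1)^Suc (p-j) * gbinom a (Suc (p-j))) (genfib k (k*j+r))) = V k r a (Suc p)"
    unfolding V_def by (simp add: e)
  finally show ?thesis unfolding V_def by simp
qed
lemma gb_0_left': "j > 0 \<Longrightarrow> gbinom 0 j = 0"
  by (cases j) auto

lemma U_zero: "U k r 0 n = genfib k (k*n+r)"
proof (cases n)
  case 0 then show ?thesis by (simp add: U_def)
next
  case (Suc n') then show ?thesis
    unfolding U_def by (simp add: sum.atMost_Suc_shift del: sum.atMost_Suc)
qed

lemma U_step:
  assumes k: "1 \<le> k" and m: "m \<le> r" and r: "r < k"
    and IH: "\<And>n. U k r m n = [:0,1:]^m * genfib k (k*n+r-m)"
  shows "U k r (Suc m) (Suc n) = [:0,1:]^Suc m * genfib k (k*Suc n+r-Suc m)"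
proof -
  have N: "k \<le> k*Suc n+r-m" using m by simp
  have "genfib k (k*Suc n+r-m) = [:0,1:] * genfib k (k*Suc n+r-m-1) + genfib k (k*Suc n+r-m-k)"
    by (rule genfib_rec[OF k N])
  moreover have "k*Suc n+r-m-k = k*n+r-m" using m by simp
  moreover have "k*Suc n+r-m-1 = k*Suc n+r-Suc m" by simp
  ultimately show ?thesis using U_pascal[of k r m n] IH[of "Suc n"] IH[of n]
    by (simp add: algebra_simps)
qed

lemma U_val:
  assumes k: "1 \<le> k" and r: "r < k"
  shows "m \<le> r \<Longrightarrow> U k r m n = [:0,1:]^m * genfib k (k*n+r-m)"
proof (induction m arbitrary: n)
  case 0 then show ?case by (simp add: U_zero)
next
  case (Suc m)
  show ?case
  proof (cases n)
    case 0
    have "U k r (Suc m) 0 = genfib k r" by (simp add: U_def)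
    also have "\<dots> = [:0,1:]^r" using r by (simp add: genfib_small)
    also have "\<dots> = [:0,1:]^Suc m * genfib k (r - Suc m)"
    proof -
      have "r - Suc m < k" using r by simp
      then have "genfib k (r - Suc m) = [:0,1:]^(r - Suc m)" by (rule genfib_small)
      moreover have "[:0,1::int:]^r = [:0,1:]^Suc m * [:0,1:]^(r - Suc m)"
        using Suc.prems by (metis power_add le_add_diff_inverse)
      ultimately show ?thesis by simp
    qed
    finally show ?thesis using 0 by simp
  next
    case (Suc n')
    then show ?thesis using U_step[OF k _ r, of m n'] Suc.IH Suc.prems by simp
  qed
qed

lemma partA:
  assumes k: "1 \<le> k" and r: "r < k" and n: "n \<ge> 1"
  shows "U k r (Suc r) n = [:0,1:]^(r+1) * genfib k (k*n-1)"
proof -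
  obtain n' where n': "n = Suc n'" using n by (cases n) auto
  have "k*Suc n'+r-Suc r = k*n - 1" using n' by simp
  then show ?thesis using U_step[OF k _ r, of r n'] U_val[OF k r] n' by simp
qed
lemma V_zero: "V k r 0 p = genfib k (k*p+r)"
proof -
  have "V k r 0 p = (\<Sum>j\<le>p. if j = p then genfib k (k*j+r) else 0)"
    unfolding V_def by (rule sum.cong) (auto simp: gb_0_left')
  then show ?thesis by simp
qed

definition claimB where
  "claimB k r p i \<longleftrightarrow> [:0,1:]^k * V k r (int i - int k + int r) p = [:0,1:]^(r+i) * genfib k (k*(p+1) - i)"

lemma B_base:
  assumes "0 < i" "i < k + 1" "r < k"
  shows "claimB k r 0 i"
proof -
  have "genfib k (k - i) = [:0,1:]^(k-i)" using assms by (intro genfib_small) auto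
  moreover have "[:0,1::int:]^(r+i) * [:0,1:]^(k-i) = [:0,1:]^k * [:0,1:]^r"
    using assms by (simp add: power_add[symmetric] add.commute)
  moreover have "V k r a 0 = genfib k r" for a by (simp add: V_def)
  moreover have "genfib k r = [:0,1:]^r" using assms by (intro genfib_small) auto
  ultimately show ?thesis unfolding claimB_def by simp
qed

lemma B_step:
  assumes k: "1 \<le> k" and r: "r < k"
    and IH: "\<And>i. 0 < i \<Longrightarrow> i < k + p + 1 \<Longrightarrow> claimB k r p i"
  shows "0 < i \<Longrightarrow> i < k + Suc p + 1 \<Longrightarrow> claimB k r (Suc p) i"
proof -
  have mid: "claimB k r (Suc p) (k - r)"
  proof -
    have a: "int (k - r) - int k + int r = 0" using r by simp
    have e: "k * (Suc p + 1) - (k - r) = k * Suc p + r" using r by (simp add: algebra_simps)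
    have "r + (k - r) = k" using r by simp
    then show ?thesis unfolding claimB_def a e V_zero by simp
  qed
  have rec: "[:0,1:]^(r+i) * genfib k (k*(Suc p+1) - i) =
      [:0,1:]^(r+Suc i) * genfib k (k*(Suc p+1) - Suc i) + [:0,1:]^(r+i) * genfib k (k*(p+1) - i)"
    if "i \<le> k + p" for i
  proof -
    have pk: "p \<le> k * p" using k by simp
    have "k*(Suc p+1) = k + k + k*p" by (simp add: algebra_simps)
    then have N: "k \<le> k*(Suc p+1) - i" using that pk by linarith
    have "genfib k (k*(Suc p+1) - i) = [:0,1:] * genfib k (k*(Suc p+1) - i - 1) + genfib k (k*(Suc p+1) - i - k)"
      by (rule genfib_rec[OF k N])
    moreover have "k*(Suc p+1) - i - k = k*(p+1) - i" by (simp add: algebra_simps)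
    moreover have "k*(Suc p+1) - i - 1 = k*(Suc p+1) - Suc i" by simp
    ultimately show ?thesis by (simp add: algebra_simps)
  qed
  have aS: "int (Suc i) - int k + int r = (int i - int k + int r) + 1" for i by simp
  have up: "i < k + Suc p + 1 \<longrightarrow> claimB k r (Suc p) i" if "k - r \<le> i" for i
    using that
  proof (induction i rule: dec_induct)
    case base then show ?case using mid by simp
  next
    case (step i)
    show ?case
    proof
      assume lt: "Suc i < k + Suc p + 1"
      have ci: "claimB k r (Suc p) i" using step lt by simp
      have cp: "claimB k r p i" using IH[of i] step r lt by simp
      show "claimB k r (Suc p) (Suc i)"
        using ci cp rec[of i] lt unfolding claimB_def aS V_pascal
        by (simp add: algebra_simps)
    qed
  qed
  have down: "claimB k r (Suc p) i" if "0 < i" "i \<le> k - r" for i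
    using that(2)
  proof (induction i rule: inc_induct)
    case base then show ?case using mid by simp
  next
    case (step i)
    have cp: "claimB k r p i" using IH[of i] step that(1) r by simp
    have "V k r (int i - int k + int r) (Suc p) = V k r (int (Suc i) - int k + int r) (Suc p)
          + V k r (int i - int k + int r) p"
      unfolding aS V_pascal by simp
    then show ?case
      using step.IH cp rec[of i] step.hyps unfolding claimB_def
      by (simp add: algebra_simps)
  qed
  assume "0 < i" "i < k + Suc p + 1"
  then show "claimB k r (Suc p) i"
    using up[of i] down[of i] by (cases "k - r \<le> i") auto
qed
lemma B_all:
  assumes k: "1 \<le> k" and r: "r < k"
  shows "0 < i \<Longrightarrow> i < k + p + 1 \<Longrightarrow> claimB k r p i"
proof (induction p arbitrary: i)
  case 0 then show ?case using B_base r by simp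
next
  case (Suc p) then show ?case using B_step[OF k r, of p i] by blast
qed

lemma pconst: "[:c:] * q = smult c q" by simp

theorem lemma10:
  fixes k r :: nat
  assumes "k \<ge> 1" and "r < k"
  shows "(\<forall>n\<ge>1. (\<Sum>j=0..n. [:(-1) ^ j * gbinom (int r + 1) j:] * genfib k (k * (n - j) + r))
                   = [:0, 1:] ^ (r + 1) * genfib k (k * n - 1))
       \<and> (\<forall>n\<ge>1. \<forall>i::nat. 0 < i \<and> i < k + n \<longrightarrow>
            (\<Sum>j=0..n-1. [:(-1) ^ (n - 1 - j) * gbinom (int i - int k + int r) (n - 1 - j):]
                 * [:0, 1:] ^ k * genfib k (k * j + r))
            = [:0, 1:] ^ (r + i) * genfib k (k * n - i))"
proof (intro conjI allI impI)
  fix n :: nat assume n: "n \<ge> 1"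
  have "(\<Sum>j=0..n. [:(-1) ^ j * gbinom (int r + 1) j:] * genfib k (k * (n - j) + r)) = U k r (Suc r) n"
    unfolding U_def atLeast0AtMost pconst by (simp add: add.commute)
  then show "(\<Sum>j=0..n. [:(-1) ^ j * gbinom (int r + 1) j:] * genfib k (k * (n - j) + r))
                   = [:0, 1:] ^ (r + 1) * genfib k (k * n - 1)"
    using partA[OF assms(1,2) n] by simp
next
  fix n i :: nat assume n: "n \<ge> 1" and i: "0 < i \<and> i < k + n"
  have "(\<Sum>j=0..n-1. [:(-1) ^ (n - 1 - j) * gbinom (int i - int k + int r) (n - 1 - j):]
                 * [:0, 1:] ^ k * genfib k (k * j + r)) = [:0,1:]^k * V k r (int i - int k + int r) (n-1)"
    unfolding V_def atLeast0AtMost sum_distrib_left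
    by (rule sum.cong) (simp_all add: algebra_simps)
  also have "\<dots> = [:0, 1:] ^ (r + i) * genfib k (k * n - i)"
    using B_all[OF assms(1,2), of i "n-1"] n i unfolding claimB_def by simp
  finally show "(\<Sum>j=0..n-1. [:(-1) ^ (n - 1 - j) * gbinom (int i - int k + int r) (n - 1 - j):]
                 * [:0, 1:] ^ k * genfib k (k * j + r)) = [:0, 1:] ^ (r + i) * genfib k (k * n - i)" .
qed
end
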